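(* Let $w_r \ge w_c \ge 2$ be integers and let $H_{\mathrm{reg}}$ be the bipartite graph constructed from $(w_c,w_r)$ as described in the context. Then the girth of $H_{\mathrm{reg}}$ is $8$, and the binary linear code whose parity-check matrix is the check-node-by-variable-node incidence matrix of $H_{\mathrm{reg}}$ has minimum distance $d_{\min} = 2^{w_c}$.
   Context: The graph $H_{\mathrm{reg}}$ is a bipartite graph between "variable nodes" and "check nodes", built as follows from integers $w_r \ge w_c \ge 2$. (1) Base tree $H_{\mathrm{base}}$: a root check node is adjacent to $w_r$ variable nodes $v_{1,0},\dots,v_{w_r,0}$. Each $v_{i,0}$ has $w_c-1$ further (child) check nodes, and each of these child check nodes has $w_r-1$ further (child) variable nodes. The $(w_c-1)(w_r-1)$ variable nodes below $v_{i,0}$ are labelled $v_{i,1},\dots,v_{i,(w_c-1)(w_r-1)}$, where for $k=1,\dots,w_c-1$ the nodes $v_{i,(k-1)(w_r-1)+1},\dots,v_{i,k(w_r-1)}$ are the children of the $k$-th child check node of $v_{i,0}$. These nodes $v_{i,j}$ with $j\ge 1$ are called last-layer variable nodes. (2) For each $j=1,\dots,(w_c-1)(w_r-1)$ add a new check node $c_j$ adjacent to $v_{1,j},v_{2,j},\dots,v_{w_r,j}$. Call the resulting graph $G_0$. (3) If $w_c \ge 3$, for $s=1,\dots,w_c-2$: let $G_s$ consist of $w_r$ disjoint copies of $G_{s-1}$, together with, for every last-layer variable node $u$ of $G_{s-1}$ (i.e. every variable node of $G_{s-1}$ coming from a last-layer variable node of some copy of $H_{\mathrm{base}}$), one new check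 node adjacent to the $w_r$ copies of $u$. Finally $H_{\mathrm{reg}} = G_{w_c-2}$. The girth of a graph is the length of its shortest cycle. The code associated with $H_{\mathrm{reg}}$ is the set of binary vectors indexed by variable nodes whose support meets every check node's neighbourhood in an even number of vertices; $d_{\min}$ is the minimum Hamming weight of a nonzero codeword. *)

theory Defs
  imports Main "HOL-Library.Extended_Nat"
begin

text \<open>Variable nodes: (copy indices, i, j), standing for v_{i,j} in the copy of H_base
  selected by the list of copy indices (most recent copy index first).\<close>
type_synonym vnode = "nat list \<times> nat \<times> nat"

text \<open>Root: root check of H_base; Child i k: k-th child check of v_{i,0};
  CJ j: check c_j added in step (2); Glue s i j: check added in step (3) at stage s for the
  last-layer variable node v_{i,j} of (a copy of) G_{s-1}.\<close>
datatype ckind = Root | Child nat nat | CJ nat | Glue nat nat nat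

type_synonym cnode = "nat list \<times> ckind"

type_synonym bgraph = "vnode set \<times> cnode set \<times> (vnode \<times> cnode) set"

definition G0 :: "nat \<Rightarrow> nat \<Rightarrow> bgraph" where
  "G0 wc wr =
    (let L = (wc - 1) * (wr - 1) in
     ({([], i, j) | i j. 1 \<le> i \<and> i \<le> wr \<and> j \<le> L},
      {([], Root)} \<union> {([], Child i k) | i k. 1 \<le> i \<and> i \<le> wr \<and> 1 \<le> k \<and> k \<le> wc - 1}
        \<union> {([], CJ j) | j. 1 \<le> j \<and> j \<le> L},
      {(([], i, 0), ([], Root)) | i. 1 \<le> i \<and> i \<le> wr}
      \<union> {(([], i, 0), ([], Child i k)) | i k. 1 \<le> i \<and> i \<le> wr \<and> 1 \<le> k \<and> k \<le> wc - 1}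
      \<union> {(([], i, j), ([], Child i k)) | i j k. 1 \<le> i \<and> i \<le> wr \<and> 1 \<le> k \<and> k \<le> wc - 1
             \<and> (k - 1) * (wr - 1) + 1 \<le> j \<and> j \<le> k * (wr - 1)}
      \<union> {(([], i, j), ([], CJ j)) | i j. 1 \<le> i \<and> i \<le> wr \<and> 1 \<le> j \<and> j \<le> L}))"

text \<open>G_s for s \<ge> 1: w_r disjoint copies of G_{s-1} (copy t prepends t to the copy list),
  plus one new check per last-layer variable node u of G_{s-1}, adjacent to the w_r copies of u.\<close>
fun Gs :: "nat \<Rightarrow> nat \<Rightarrow> nat \<Rightarrow> bgraph" where
  "Gs wc wr 0 = G0 wc wr"
| "Gs wc wr (Suc s) =
    (case Gs wc wr s of (V, C, E) \<Rightarrow>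
      ({(t # cs, i, j) | t cs i j. 1 \<le> t \<and> t \<le> wr \<and> (cs, i, j) \<in> V},
       {(t # ds, \<kappa>) | t ds \<kappa>. 1 \<le> t \<and> t \<le> wr \<and> (ds, \<kappa>) \<in> C}
         \<union> {(cs, Glue (Suc s) i j) | cs i j. (cs, i, j) \<in> V \<and> 1 \<le> j},
       {((t # cs, i, j), (t # ds, \<kappa>)) | t cs i j ds \<kappa>. 1 \<le> t \<and> t \<le> wr
           \<and> ((cs, i, j), (ds, \<kappa>)) \<in> E}
         \<union> {((t # cs, i, j), (cs, Glue (Suc s) i j)) | t cs i j. 1 \<le> t \<and> t \<le> wr
           \<and> (cs, i, j) \<in> V \<and> 1 \<le> j}))"

definition Hreg :: "nat \<Rightarrow> nat \<Rightarrow> bgraph" where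
  "Hreg wc wr = Gs wc wr (wc - 2)"

fun badj :: "bgraph \<Rightarrow> (vnode + cnode) \<Rightarrow> (vnode + cnode) \<Rightarrow> bool" where
  "badj (V, C, E) (Inl v) (Inr c) \<longleftrightarrow> v \<in> V \<and> c \<in> C \<and> (v, c) \<in> E"
| "badj (V, C, E) (Inr c) (Inl v) \<longleftrightarrow> v \<in> V \<and> c \<in> C \<and> (v, c) \<in> E"
| "badj _ _ _ \<longleftrightarrow> False"

definition is_cycle :: "bgraph \<Rightarrow> (vnode + cnode) list \<Rightarrow> bool" where
  "is_cycle G xs \<longleftrightarrow> length xs \<ge> 3 \<and> distinct xs \<and>
     (\<forall>i < length xs. badj G (xs ! i) (xs ! ((i + 1) mod length xs)))"

definition girth :: "bgraph \<Rightarrow> enat" where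
  "girth G = (INF xs \<in> {xs. is_cycle G xs}. enat (length xs))"

text \<open>Codewords, as supports S \<subseteq> V of binary vectors: every check sees an even number of
  vertices of S.\<close>
definition is_codeword :: "bgraph \<Rightarrow> vnode set \<Rightarrow> bool" where
  "is_codeword G S \<longleftrightarrow> (case G of (V, C, E) \<Rightarrow>
     S \<subseteq> V \<and> (\<forall>c \<in> C. even (card {v \<in> S. (v, c) \<in> E})))"

definition dmin :: "bgraph \<Rightarrow> enat" where
  "dmin G = (INF S \<in> {S. is_codeword G S \<and> S \<noteq> {}}. enat (card S))"

end

theory Submission
  imports Defs
begin


lemma Gs_Suc_E:
  assumes "Gs wc wr s = (V,C,E)"
  shows "(v,c) \<in> snd (snd (Gs wc wr (Suc s))) \<longleftrightarrow>
    (\<exists>t cs i j ds \<kappa>. v=(t#cs,i,j) \<and> c=(t#ds,\<kappa>) \<and> 1\<le>t \<and> t\<le>wr \<and> ((cs,i,j),(ds,\<kappa>))\<in>E) \<or>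
    (\<exists>t cs i j. v=(t#cs,i,j) \<and> c=(cs,Glue (Suc s) i j) \<and> 1\<le>t \<and> t\<le>wr \<and> (cs,i,j)\<in>V \<and> 1\<le>j)"
  using assms by auto

lemma Gs_Suc_V:
  assumes "Gs wc wr s = (V,C,E)"
  shows "v \<in> fst (Gs wc wr (Suc s)) \<longleftrightarrow>
    (\<exists>t cs i j. v=(t#cs,i,j) \<and> 1\<le>t \<and> t\<le>wr \<and> (cs,i,j)\<in>V)"
  using assms by auto

lemma Gs_Suc_C:
  assumes "Gs wc wr s = (V,C,E)"
  shows "c \<in> fst (snd (Gs wc wr (Suc s))) \<longleftrightarrow>
    (\<exists>t ds \<kappa>. c=(t#ds,\<kappa>) \<and> 1\<le>t \<and> t\<le>wr \<and> (ds,\<kappa>)\<in>C) \<or>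
    (\<exists>cs i j. c=(cs,Glue (Suc s) i j) \<and> (cs,i,j)\<in>V \<and> 1\<le>j)"
  using assms by auto

definition inv :: "nat \<Rightarrow> bgraph \<Rightarrow> bool" where
  "inv s G \<longleftrightarrow> (case G of (V,C,E) \<Rightarrow> finite V \<and> E \<subseteq> V \<times> C \<and>
      (\<forall>ds s' i j. (ds, Glue s' i j) \<in> C \<longrightarrow> s' \<le> s))"

lemma inv_G0: "inv 0 (G0 wc wr)"
proof -
  let ?L = "(wc - 1) * (wr - 1)"
  have "fst (G0 wc wr) \<subseteq> (\<lambda>(i,j). ([],i,j)) ` ({1..wr} \<times> {0..?L})"
    by (auto simp: G0_def Let_def)
  hence "finite (fst (G0 wc wr))" by (rule finite_subset) auto
  moreover have kk: "\<And>k j. k \<le> wc - Suc 0 \<Longrightarrow> j \<le> k * (wr - Suc 0) \<Longrightarrow> j \<le> (wc - Suc 0) * (wr - Suc 0)"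
    by (meson le_trans mult_le_mono1)
  ultimately show ?thesis unfolding inv_def G0_def Let_def by (auto intro: kk)
qed

lemma inv_Gs: "inv s (Gs wc wr s)"
proof (induction s)
  case 0 thus ?case using inv_G0 by simp
next
  case (Suc s)
  obtain V C E where G: "Gs wc wr s = (V,C,E)" by (cases "Gs wc wr s") auto
  with Suc have fV: "finite V" and EVC: "E \<subseteq> V \<times> C" and gl: "\<forall>ds s' i j. (ds, Glue s' i j) \<in> C \<longrightarrow> s' \<le> s"
    by (auto simp: inv_def)
  have "fst (Gs wc wr (Suc s)) \<subseteq> (\<lambda>(t,(cs,i,j)). (t#cs,i,j)) ` ({1..wr} \<times> V)"
    using G by (auto intro!: rev_image_eqI)
  hence "finite (fst (Gs wc wr (Suc s)))" by (rule finite_subset) (use fV in auto)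
  thus ?case using G EVC gl unfolding inv_def by (auto, force+)
qed


definition no4 :: "(vnode \<times> cnode) set \<Rightarrow> bool" where
  "no4 E \<longleftrightarrow> (\<forall>v1 v2 c1 c2. v1 \<noteq> v2 \<and> c1 \<noteq> c2 \<and> (v1,c1)\<in>E \<and> (v2,c1)\<in>E \<and> (v1,c2)\<in>E \<and> (v2,c2)\<in>E \<longrightarrow> False)"

definition no6 :: "(vnode \<times> cnode) set \<Rightarrow> bool" where
  "no6 E \<longleftrightarrow> (\<forall>v1 v2 v3 c1 c2 c3. v1 \<noteq> v2 \<and> v2 \<noteq> v3 \<and> v1 \<noteq> v3 \<and> c1 \<noteq> c2 \<and> c2 \<noteq> c3 \<and> c1 \<noteq> c3 \<and>
     (v1,c1)\<in>E \<and> (v2,c1)\<in>E \<and> (v2,c2)\<in>E \<and> (v3,c2)\<in>E \<and> (v3,c3)\<in>E \<and> (v1,c3)\<in>E \<longrightarrow> False)"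

definition pv :: "vnode \<Rightarrow> vnode" where "pv v = (tl (fst v), snd v)"
definition pc :: "cnode \<Rightarrow> cnode" where "pc c = (tl (fst c), snd c)"
definition nw :: "nat \<Rightarrow> vnode \<Rightarrow> cnode" where
  "nw s v = (tl (fst v), Glue (Suc s) (fst (snd v)) (snd (snd v)))"
definition nk :: "nat \<Rightarrow> cnode \<Rightarrow> bool" where "nk s c \<longleftrightarrow> (\<exists>i j. snd c = Glue (Suc s) i j)"

lemma edge':
  assumes G: "Gs wc wr s = (V,C,E)" and e: "(v,c) \<in> snd (snd (Gs wc wr (Suc s)))"
  shows "fst v \<noteq> [] \<and> (if nk s c then c = nw s v else fst c \<noteq> [] \<and> hd (fst c) = hd (fst v) \<and> (pv v, pc c) \<in> E)"
proof -
  have I: "E \<subseteq> V \<times> C" "\<forall>ds s' i j. (ds, Glue s' i j) \<in> C \<longrightarrow> s' \<le> s"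
    using inv_Gs[of s wc wr] G by (auto simp: inv_def)
  from e[unfolded Gs_Suc_E[OF G]] show ?thesis
  proof (elim disjE exE conjE)
    fix t cs i j ds \<kappa> assume h: "v = (t # cs, i, j)" "c = (t # ds, \<kappa>)" "((cs, i, j), ds, \<kappa>) \<in> E"
    have "(ds,\<kappa>) \<in> C" using h I by blast
    have "\<not> nk s c"
    proof
      assume "nk s c"
      then obtain i' j' where "\<kappa> = Glue (Suc s) i' j'" using h by (auto simp: nk_def)
      with \<open>(ds,\<kappa>) \<in> C\<close> I(2) have "Suc s \<le> s" by blast
      thus False by simp
    qed
    thus ?thesis using h by (simp add: pv_def pc_def)
  next
    fix t cs i j assume h: "v = (t # cs, i, j)" "c = (cs, Glue (Suc s) i j)"
    thus ?thesis by (simp add: nk_def nw_def)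
  qed
qed

lemma pv_inj: "fst v1 \<noteq> [] \<Longrightarrow> fst v2 \<noteq> [] \<Longrightarrow> hd (fst v1) = hd (fst v2) \<Longrightarrow> pv v1 = pv v2 \<Longrightarrow> v1 = v2"
  by (cases v1; cases v2) (auto simp: pv_def neq_Nil_conv)

lemma pc_inj: "fst v1 \<noteq> [] \<Longrightarrow> fst v2 \<noteq> [] \<Longrightarrow> hd (fst v1) = hd (fst v2) \<Longrightarrow> pc v1 = pc v2 \<Longrightarrow> v1 = v2"
  by (cases v1; cases v2) (auto simp: pc_def neq_Nil_conv)

lemma nw_inj: "nw s v1 = nw s v2 \<Longrightarrow> pv v1 = pv v2"
  by (auto simp: nw_def pv_def prod_eq_iff)

lemma nk_nw: "nk s (nw s v)" by (simp add: nk_def nw_def)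


context
  fixes wc wr s V C E
  assumes G: "Gs wc wr s = (V,C,E)"
begin

abbreviation "E' \<equiv> snd (snd (Gs wc wr (Suc s)))"

lemma key4:
  assumes "nk s c" "(v1,c)\<in>E'" "(v2,c)\<in>E'" "(v1,c')\<in>E'" "(v2,c')\<in>E'" "c \<noteq> c'"
  shows "v1 = v2"
proof -
  note e1 = edge'[OF G assms(2)] and e2 = edge'[OF G assms(3)] and e3 = edge'[OF G assms(4)]
    and e4 = edge'[OF G assms(5)]
  have "c = nw s v1" "c = nw s v2" using e1 e2 assms(1) by auto
  hence p: "pv v1 = pv v2" using nw_inj by metis
  show ?thesis
  proof (cases "nk s c'")
    case True
    hence "c' = nw s v1" using e3 by auto
    thus ?thesis using \<open>c = nw s v1\<close> assms(6) by simp
  next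
    case False
    hence "hd (fst v1) = hd (fst v2)" using e3 e4 by auto
    thus ?thesis using pv_inj e1 e2 p by blast
  qed
qed

lemma key6:
  assumes "nk s c" "(a,c)\<in>E'" "(b,c)\<in>E'" "(b,c')\<in>E'" "(x,c')\<in>E'" "(x,c'')\<in>E'" "(a,c'')\<in>E'"
    "c \<noteq> c'" "c \<noteq> c''"
  shows "a = b"
proof -
  note e1 = edge'[OF G assms(2)] and e2 = edge'[OF G assms(3)] and e3 = edge'[OF G assms(4)]
    and e4 = edge'[OF G assms(5)] and e5 = edge'[OF G assms(6)] and e6 = edge'[OF G assms(7)]
  have "c = nw s a" "c = nw s b" using e1 e2 assms(1) by auto
  hence p: "pv a = pv b" using nw_inj by metis
  have "\<not> nk s c'" using e3 \<open>c = nw s b\<close> assms(8) by auto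
  hence h1: "hd (fst b) = hd (fst x)" using e3 e4 by auto
  have "\<not> nk s c''" using e6 \<open>c = nw s a\<close> assms(9) by auto
  hence h2: "hd (fst a) = hd (fst x)" using e5 e6 by auto
  show ?thesis using pv_inj e1 e2 p h1 h2 by metis
qed

lemma no4_step: "no4 E \<Longrightarrow> no4 E'"
  unfolding no4_def
proof (intro allI impI, elim conjE)
  fix v1 v2 c1 c2
  assume n: "\<forall>v1 v2 c1 c2. v1 \<noteq> v2 \<and> c1 \<noteq> c2 \<and> (v1,c1)\<in>E \<and> (v2,c1)\<in>E \<and> (v1,c2)\<in>E \<and> (v2,c2)\<in>E \<longrightarrow> False"
    and a: "v1 \<noteq> v2" "c1 \<noteq> c2" "(v1,c1)\<in>E'" "(v2,c1)\<in>E'" "(v1,c2)\<in>E'" "(v2,c2)\<in>E'"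
  show False
  proof (cases "nk s c1 \<or> nk s c2")
    case True
    thus False using key4[of c1 v1 v2 c2] key4[of c2 v1 v2 c1] a by auto
  next
    case False
    note e1 = edge'[OF G a(3)] and e2 = edge'[OF G a(4)] and e3 = edge'[OF G a(5)]
      and e4 = edge'[OF G a(6)]
    have h: "hd (fst c1) = hd (fst v1)" "hd (fst c1) = hd (fst v2)" "hd (fst c2) = hd (fst v1)"
      and E: "(pv v1, pc c1) \<in> E" "(pv v2, pc c1) \<in> E" "(pv v1, pc c2) \<in> E" "(pv v2, pc c2) \<in> E"
      and ne: "fst c1 \<noteq> []" "fst c2 \<noteq> []"
      using False e1 e2 e3 e4 by auto
    have "pv v1 \<noteq> pv v2" using pv_inj e1 e2 h a(1) by metis
    moreover have "pc c1 \<noteq> pc c2" using pc_inj ne h a(2) by metis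
    ultimately show False using n E by blast
  qed
qed

lemma no6_step: "no6 E \<Longrightarrow> no6 E'"
  unfolding no6_def
proof (intro allI impI, elim conjE)
  fix v1 v2 v3 c1 c2 c3
  assume n: "\<forall>v1 v2 v3 c1 c2 c3. v1 \<noteq> v2 \<and> v2 \<noteq> v3 \<and> v1 \<noteq> v3 \<and> c1 \<noteq> c2 \<and> c2 \<noteq> c3 \<and> c1 \<noteq> c3 \<and>
     (v1,c1)\<in>E \<and> (v2,c1)\<in>E \<and> (v2,c2)\<in>E \<and> (v3,c2)\<in>E \<and> (v3,c3)\<in>E \<and> (v1,c3)\<in>E \<longrightarrow> False"
    and a: "v1 \<noteq> v2" "v2 \<noteq> v3" "v1 \<noteq> v3" "c1 \<noteq> c2" "c2 \<noteq> c3" "c1 \<noteq> c3"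
     "(v1,c1)\<in>E'" "(v2,c1)\<in>E'" "(v2,c2)\<in>E'" "(v3,c2)\<in>E'" "(v3,c3)\<in>E'" "(v1,c3)\<in>E'"
  show False
  proof (cases "nk s c1 \<or> nk s c2 \<or> nk s c3")
    case True
    moreover have "\<not> nk s c1" using key6[of c1 v1 v2 c2 v3 c3] a by auto
    moreover have "\<not> nk s c2" using key6[of c2 v2 v3 c3 v1 c1] a by auto
    moreover have "\<not> nk s c3" using key6[of c3 v3 v1 c1 v2 c2] a by auto
    ultimately show False by blast
  next
    case False
    note e1 = edge'[OF G a(7)] and e2 = edge'[OF G a(8)] and e3 = edge'[OF G a(9)]
      and e4 = edge'[OF G a(10)] and e5 = edge'[OF G a(11)] and e6 = edge'[OF G a(12)]
    have h: "hd (fst c1) = hd (fst v1)" "hd (fst c1) = hd (fst v2)" "hd (fst c2) = hd (fst v2)"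
       "hd (fst c2) = hd (fst v3)" "hd (fst c3) = hd (fst v3)"
      and E: "(pv v1, pc c1) \<in> E" "(pv v2, pc c1) \<in> E" "(pv v2, pc c2) \<in> E" "(pv v3, pc c2) \<in> E"
         "(pv v3, pc c3) \<in> E" "(pv v1, pc c3) \<in> E"
      and ne: "fst c1 \<noteq> []" "fst c2 \<noteq> []" "fst c3 \<noteq> []" "fst v1 \<noteq> []" "fst v2 \<noteq> []" "fst v3 \<noteq> []"
      using False e1 e2 e3 e4 e5 e6 by auto
    have "pv v1 \<noteq> pv v2" "pv v2 \<noteq> pv v3" "pv v1 \<noteq> pv v3" using pv_inj ne h a(1-3) by metis+
    moreover have "pc c1 \<noteq> pc c2" "pc c2 \<noteq> pc c3" "pc c1 \<noteq> pc c3" using pc_inj ne h a(4-6) by metis+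
    ultimately show False using n E by blast
  qed
qed

end


definition ok0 :: "(nat \<Rightarrow> nat) \<Rightarrow> (vnode \<times> cnode) set \<Rightarrow> bool" where
  "ok0 b E \<longleftrightarrow> (\<forall>v c. (v,c)\<in>E \<longrightarrow> (\<exists>i j \<kappa>. v=([],i,j) \<and> c=([],\<kappa>) \<and>
     (if j=0 then \<kappa>=Root \<or> (\<exists>k. \<kappa> = Child i k) else \<kappa> = Child i (b j) \<or> \<kappa> = CJ j)))"

lemma ok0_no4: "ok0 b E \<Longrightarrow> no4 E"
  unfolding no4_def
proof (intro allI impI, elim conjE)
  fix v1 v2 c1 c2
  assume ok: "ok0 b E" and a: "v1 \<noteq> v2" "c1 \<noteq> c2" "(v1,c1)\<in>E" "(v2,c1)\<in>E" "(v1,c2)\<in>E" "(v2,c2)\<in>E"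
  obtain i1 j1 k1 i2 j2 k2 where v: "v1 = ([],i1,j1)" "c1 = ([],k1)" "v2 = ([],i2,j2)" "c2 = ([],k2)"
    using ok a unfolding ok0_def by meson
  have N: "(if j=0 then \<kappa>=Root \<or> (\<exists>k. \<kappa> = Child i k) else \<kappa> = Child i (b j) \<or> \<kappa> = CJ j)"
    if "(([],i,j), ([],\<kappa>)) \<in> E" for i j \<kappa> using ok that unfolding ok0_def by fastforce
  note n = N[OF a(3)[unfolded v]] N[OF a(4)[unfolded v]] N[OF a(5)[unfolded v]] N[OF a(6)[unfolded v]]
  show False using n a(1-2) unfolding v by (auto split: if_splits)
qed

lemma ok0_no6: "ok0 b E \<Longrightarrow> no6 E"
  unfolding no6_def
proof (intro allI impI, elim conjE)
  fix v1 v2 v3 c1 c2 c3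
  assume ok: "ok0 b E" and a: "v1 \<noteq> v2" "v2 \<noteq> v3" "v1 \<noteq> v3" "c1 \<noteq> c2" "c2 \<noteq> c3" "c1 \<noteq> c3"
     "(v1,c1)\<in>E" "(v2,c1)\<in>E" "(v2,c2)\<in>E" "(v3,c2)\<in>E" "(v3,c3)\<in>E" "(v1,c3)\<in>E"
  obtain i1 j1 k1 i2 j2 k2 i3 j3 k3 where v: "v1 = ([],i1,j1)" "c1 = ([],k1)" "v2 = ([],i2,j2)" "c2 = ([],k2)"
     "v3 = ([],i3,j3)" "c3 = ([],k3)"
    using ok a unfolding ok0_def by meson
  have N: "(if j=0 then \<kappa>=Root \<or> (\<exists>k. \<kappa> = Child i k) else \<kappa> = Child i (b j) \<or> \<kappa> = CJ j)"
    if "(([],i,j), ([],\<kappa>)) \<in> E" for i j \<kappa> using ok that unfolding ok0_def by fastforce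
  note n = N[OF a(7)[unfolded v]] N[OF a(8)[unfolded v]] N[OF a(9)[unfolded v]]
     N[OF a(10)[unfolded v]] N[OF a(11)[unfolded v]] N[OF a(12)[unfolded v]]
  show False using n a(1-6) unfolding v by (auto split: if_splits)
qed


lemma blk: assumes "0 < (m::nat)" "(k-1)*m+1 \<le> j" "j \<le> k*m" shows "k = (j-1) div m + 1"
proof -
  have "k \<ge> 1" using assms by (cases k) auto
  then obtain k' where k: "k = Suc k'" by (cases k) auto
  have "(j-1) div m = k'"
    by (rule div_nat_eqI) (use assms in \<open>simp_all add: k algebra_simps\<close>)
  thus ?thesis using k by simp
qed

lemma ok0_G0: "ok0 (\<lambda>j. (j-1) div (wr-1) + 1) (snd (snd (G0 wc wr)))"
proof -
  have "0 < wr - 1" if "(k-1)*(wr-1)+1 \<le> j" "j \<le> k*(wr-1)" for k j :: nat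
    using that by (cases "wr - 1") auto
  hence b: "k = Suc ((j - Suc 0) div (wr - Suc 0))" if "Suc ((k - Suc 0) * (wr - Suc 0)) \<le> j" "j \<le> k * (wr - Suc 0)" for k j :: nat
    using that blk by simp
  show ?thesis unfolding ok0_def G0_def Let_def
    by (auto intro: b)
qed

lemma no46_Gs: "no4 (snd (snd (Gs wc wr s))) \<and> no6 (snd (snd (Gs wc wr s)))"
proof (induction s)
  case 0 thus ?case using ok0_no4[OF ok0_G0] ok0_no6[OF ok0_G0] by simp
next
  case (Suc s)
  obtain V C E where G: "Gs wc wr s = (V,C,E)" by (cases "Gs wc wr s") auto
  thus ?case using Suc no4_step[OF G] no6_step[OF G] by simp
qed

lemma badj_E: "badj (V,C,E) x y \<Longrightarrow> (\<exists>v c. x = Inl v \<and> y = Inr c \<and> (v,c)\<in>E) \<or> (\<exists>v c. x = Inr c \<and> y = Inl v \<and> (v,c)\<in>E)"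
  by (cases x; cases y) auto

lemma badj_isl: "badj G x y \<Longrightarrow> isl x \<noteq> isl y"
  by (cases G; cases x; cases y) auto

lemma cyc_ge8:
  assumes cy: "is_cycle (V,C,E) xs" and n4: "no4 E" and n6: "no6 E"
  shows "8 \<le> length xs"
proof (rule ccontr)
  assume "\<not> 8 \<le> length xs"
  moreover have "3 \<le> length xs" and dxs: "distinct xs" using cy by (auto simp: is_cycle_def)
  ultimately have "length xs \<in> {3,4,5,6,7}" by auto
  have ad: "badj (V,C,E) (xs!i) (xs!((i+1) mod length xs))" if "i < length xs" for i
    using cy that by (auto simp: is_cycle_def)
  have il: "isl (xs!i) \<noteq> isl (xs!((i+1) mod length xs))" if "i < length xs" for i
    using badj_isl ad that by blast
  consider "length xs = 3" | "length xs = 4" | "length xs = 5" | "length xs = 6" | "length xs = 7"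
    using \<open>length xs \<in> _\<close> by auto
  thus False
  proof cases
    case 1
    then obtain a b c where x: "xs = [a,b,c]" by (auto simp: length_Suc_conv numeral_eq_Suc)
    show False using il[of 0] il[of 1] il[of 2] unfolding x by simp
  next
    case 3
    then obtain a b c d e where x: "xs = [a,b,c,d,e]" by (auto simp: length_Suc_conv numeral_eq_Suc)
    show False using il[of 0] il[of 1] il[of 2] il[of 3] il[of 4] unfolding x by simp
  next
    case 5
    then obtain a b c d e f g where x: "xs = [a,b,c,d,e,f,g]" by (auto simp: length_Suc_conv numeral_eq_Suc)
    show False using il[of 0] il[of 1] il[of 2] il[of 3] il[of 4] il[of 5] il[of 6] unfolding x by simp
  next
    case 2
    then obtain a b c d where x: "xs = [a,b,c,d]" by (auto simp: length_Suc_conv numeral_eq_Suc)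
    have e: "badj (V,C,E) a b" "badj (V,C,E) b c" "badj (V,C,E) c d" "badj (V,C,E) d a"
      using ad[of 0] ad[of 1] ad[of 2] ad[of 3] unfolding x by simp_all
    have ds: "distinct [a,b,c,d]" using dxs x by simp
    show False
    proof (cases a)
      case (Inl v1)
      then obtain c1 v2 c2 where "b = Inr c1" "c = Inl v2" "d = Inr c2"
        "(v1,c1)\<in>E" "(v2,c1)\<in>E" "(v2,c2)\<in>E" "(v1,c2)\<in>E"
        using badj_E[OF e(1)] badj_E[OF e(2)] badj_E[OF e(3)] badj_E[OF e(4)] by auto
      thus False using n4[unfolded no4_def, rule_format, of v1 v2 c1 c2] ds Inl by auto
    next
      case (Inr c1)
      then obtain v1 c2 v2 where "b = Inl v1" "c = Inr c2" "d = Inl v2"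
        "(v1,c1)\<in>E" "(v1,c2)\<in>E" "(v2,c2)\<in>E" "(v2,c1)\<in>E"
        using badj_E[OF e(1)] badj_E[OF e(2)] badj_E[OF e(3)] badj_E[OF e(4)] by auto
      thus False using n4[unfolded no4_def, rule_format, of v1 v2 c1 c2] ds Inr by auto
    qed
  next
    case 4
    then obtain a b c d e f where x: "xs = [a,b,c,d,e,f]" by (auto simp: length_Suc_conv numeral_eq_Suc)
    have e: "badj (V,C,E) a b" "badj (V,C,E) b c" "badj (V,C,E) c d" "badj (V,C,E) d e"
       "badj (V,C,E) e f" "badj (V,C,E) f a"
      using ad[of 0] ad[of 1] ad[of 2] ad[of 3] ad[of 4] ad[of 5] unfolding x by simp_all
    have ds: "distinct [a,b,c,d,e,f]" using dxs x by simp
    show False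
    proof (cases a)
      case (Inl v1)
      then obtain c1 v2 c2 v3 c3 where "b = Inr c1" "c = Inl v2" "d = Inr c2" "e = Inl v3" "f = Inr c3"
        "(v1,c1)\<in>E" "(v2,c1)\<in>E" "(v2,c2)\<in>E" "(v3,c2)\<in>E" "(v3,c3)\<in>E" "(v1,c3)\<in>E"
        using badj_E[OF e(1)] badj_E[OF e(2)] badj_E[OF e(3)] badj_E[OF e(4)] badj_E[OF e(5)] badj_E[OF e(6)]
        by auto
      thus False using n6[unfolded no6_def, rule_format, of v1 v2 v3 c1 c2 c3] ds Inl by auto
    next
      case (Inr c1)
      then obtain v1 c2 v2 c3 v3 where "b = Inl v1" "c = Inr c2" "d = Inl v2" "e = Inr c3" "f = Inl v3"
        "(v1,c1)\<in>E" "(v1,c2)\<in>E" "(v2,c2)\<in>E" "(v2,c3)\<in>E" "(v3,c3)\<in>E" "(v3,c1)\<in>E"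
        using badj_E[OF e(1)] badj_E[OF e(2)] badj_E[OF e(3)] badj_E[OF e(4)] badj_E[OF e(5)] badj_E[OF e(6)]
        by auto
      thus False using n6[unfolded no6_def, rule_format, of v1 v2 v3 c2 c3 c1] ds Inr by auto
    qed
  qed
qed


lemma lift_badj:
  assumes "badj (Gs wc wr s) (Inl (cs,i,j)) (Inr (ds,\<kappa>))" "1 \<le> t" "t \<le> wr"
  shows "badj (Gs wc wr (Suc s)) (Inl (t#cs,i,j)) (Inr (t#ds,\<kappa>))"
proof -
  obtain V C E where G: "Gs wc wr s = (V,C,E)" by (cases "Gs wc wr s") auto
  show ?thesis using assms G by auto
qed

lemma lift_rep:
  assumes "badj (G0 wc wr) (Inl ([],i,j)) (Inr ([],\<kappa>))" "1 \<le> wr"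
  shows "badj (Gs wc wr s) (Inl (replicate s 1,i,j)) (Inr (replicate s 1,\<kappa>))"
proof (induction s)
  case 0 thus ?case using assms by simp
next
  case (Suc s) thus ?case using lift_badj[OF Suc, of 1] assms(2) by simp
qed

lemma badj_sym: "badj G x y \<Longrightarrow> badj G y x"
  by (cases G; cases x; cases y) auto

definition cyc :: "nat \<Rightarrow> (vnode + cnode) list" where
  "cyc s = (let r = replicate s 1 in [Inl (r,1,0), Inr (r,Child 1 1), Inl (r,1,1), Inr (r,CJ 1),
     Inl (r,2,1), Inr (r,Child 2 1), Inl (r,2,0), Inr (r,Root)])"

lemma cycle8:
  assumes "2 \<le> wc" "2 \<le> wr"
  shows "is_cycle (Gs wc wr s) (cyc s)"
proof -
  let ?xs = "cyc s"
  have "1 \<le> wc - 1" "1 \<le> wr - 1" using assms by auto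
  hence L: "1 \<le> (wc - 1) * (wr - 1)" by simp
  have a: "badj (G0 wc wr) (Inl ([],1,0)) (Inr ([],Child 1 1))"
       "badj (G0 wc wr) (Inl ([],1,1)) (Inr ([],Child 1 1))"
       "badj (G0 wc wr) (Inl ([],1,1)) (Inr ([],CJ 1))"
       "badj (G0 wc wr) (Inl ([],2,1)) (Inr ([],CJ 1))"
       "badj (G0 wc wr) (Inl ([],2,1)) (Inr ([],Child 2 1))"
       "badj (G0 wc wr) (Inl ([],2,0)) (Inr ([],Child 2 1))"
       "badj (G0 wc wr) (Inl ([],2,0)) (Inr ([],Root))"
       "badj (G0 wc wr) (Inl ([],1,0)) (Inr ([],Root))"
    using assms L by (auto simp: G0_def Let_def)
  have w1: "1 \<le> wr" using assms by simp
  note b = lift_rep[OF a(1) w1, of s] lift_rep[OF a(2) w1, of s] lift_rep[OF a(3) w1, of s] lift_rep[OF a(4) w1, of s]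
     lift_rep[OF a(5) w1, of s] lift_rep[OF a(6) w1, of s] lift_rep[OF a(7) w1, of s] lift_rep[OF a(8) w1, of s]
  have "\<forall>i<8. badj (Gs wc wr s) (?xs ! i) (?xs ! ((i + 1) mod 8))"
  proof (intro allI impI)
    fix i :: nat assume "i < 8"
    hence "i = 0 \<or> i = 1 \<or> i = 2 \<or> i = 3 \<or> i = 4 \<or> i = 5 \<or> i = 6 \<or> i = 7" by auto
    thus "badj (Gs wc wr s) (?xs ! i) (?xs ! ((i + 1) mod 8))"
      using b b[THEN badj_sym] by (auto simp: cyc_def Let_def)
  qed
  thus ?thesis unfolding is_cycle_def by (simp add: cyc_def Let_def)
qed

lemma girth_Gs:
  assumes "2 \<le> wc" "2 \<le> wr"
  shows "girth (Gs wc wr s) = 8"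
proof -
  obtain V C E where G: "Gs wc wr s = (V,C,E)" by (cases "Gs wc wr s") auto
  have n: "no4 E" "no6 E" using no46_Gs[of wc wr s] G by auto
  have lo: "8 \<le> enat (length xs)" if "is_cycle (Gs wc wr s) xs" for xs
    using cyc_ge8[OF that[unfolded G] n] by (simp add: numeral_eq_enat)
  have "girth (Gs wc wr s) \<le> enat (length (cyc s))"
    unfolding girth_def by (rule INF_lower) (use cycle8[OF assms, of s] in simp)
  moreover have "length (cyc s) = 8" by (simp add: cyc_def Let_def)
  ultimately have "girth (Gs wc wr s) \<le> 8" by (simp add: numeral_eq_enat)
  moreover have "8 \<le> girth (Gs wc wr s)" unfolding girth_def by (rule INF_greatest) (use lo in simp)
  ultimately show ?thesis by simp
qed


lemma code_iff: "is_codeword G S \<longleftrightarrow> S \<subseteq> fst G \<and> (\<forall>c\<in>fst (snd G). even (card {v\<in>S. (v,c) \<in> snd (snd G)}))"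
  unfolding is_codeword_def by (simp add: case_prod_beta)

lemma other:
  assumes "finite N" "x \<in> N" "even (card N)" shows "\<exists>y\<in>N. y \<noteq> x"
proof (rule ccontr)
  assume "\<not> ?thesis"
  hence "N = {x}" using assms(2) by blast
  thus False using assms(3) by simp
qed

lemma other_code:
  assumes "is_codeword G S" "finite (fst G)" "c \<in> fst (snd G)" "x \<in> S" "(x,c) \<in> snd (snd G)"
  shows "\<exists>y\<in>S. y \<noteq> x \<and> (y,c) \<in> snd (snd G)"
proof -
  have "S \<subseteq> fst G" and ev: "even (card {v\<in>S. (v,c) \<in> snd (snd G)})" using assms(1,3) by (auto simp: code_iff)
  hence "{v\<in>S. (v,c) \<in> snd (snd G)} \<subseteq> fst G" by auto
  hence "finite {v\<in>S. (v,c) \<in> snd (snd G)}" using assms(2) by (rule finite_subset)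
  from other[OF this _ ev, of x] assms(4,5) show ?thesis by auto
qed

lemma fin_Gs: "finite (fst (Gs wc wr s))"
  using inv_Gs[of s wc wr] unfolding inv_def by (simp add: case_prod_beta)

lemma V0_iff: "(cs,i,j) \<in> fst (G0 wc wr) \<longleftrightarrow> cs = [] \<and> 1 \<le> i \<and> i \<le> wr \<and> j \<le> (wc - 1) * (wr - 1)"
  unfolding G0_def Let_def fst_conv by blast

lemma nb_child: "(y,(ds,Child i k)) \<in> snd (snd (G0 wc wr)) \<Longrightarrow> \<exists>j. y = ([],i,j)"
  unfolding G0_def Let_def snd_conv by blast

lemma nb_CJ: "(y,(ds,CJ j)) \<in> snd (snd (G0 wc wr)) \<Longrightarrow> \<exists>i. y = ([],i,j)"
  unfolding G0_def Let_def snd_conv by blast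

lemma CJ_facts: "1 \<le> i \<Longrightarrow> i \<le> wr \<Longrightarrow> 1 \<le> j \<Longrightarrow> j \<le> (wc - 1) * (wr - 1) \<Longrightarrow>
   ([],CJ j) \<in> fst (snd (G0 wc wr)) \<and> (([],i,j),([],CJ j)) \<in> snd (snd (G0 wc wr))"
  unfolding G0_def Let_def snd_conv fst_conv by blast

lemma Child1_facts: "1 \<le> i \<Longrightarrow> i \<le> wr \<Longrightarrow> 2 \<le> wc \<Longrightarrow>
   ([],Child i 1) \<in> fst (snd (G0 wc wr)) \<and> (([],i,0),([],Child i 1)) \<in> snd (snd (G0 wc wr))"
  unfolding G0_def Let_def snd_conv fst_conv by auto

lemma child_exists:
  assumes "2 \<le> wr" "1 \<le> j" "j \<le> (wc - 1) * (wr - 1)" "1 \<le> i" "i \<le> wr"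
  shows "\<exists>k. (([],i,j),([],Child i k)) \<in> snd (snd (G0 wc wr)) \<and> ([],Child i k) \<in> fst (snd (G0 wc wr))"
proof -
  let ?m = "wr - 1" let ?q = "(j-1) div ?m" let ?r = "(j-1) mod ?m"
  have m: "0 < ?m" using assms by simp
  have d: "?q * ?m + ?r = j - 1" by (rule div_mult_mod_eq)
  have r: "?r < ?m" using m by simp
  have "j - 1 < (wc - 1) * ?m" using assms by simp
  hence qk: "?q < wc - 1" using less_mult_imp_div_less by blast
  have b1: "?q * ?m + 1 \<le> j" using d assms(2) by linarith
  have "j \<le> ?q * ?m + ?m" using d r assms(2) by linarith
  hence b2: "j \<le> (?q + 1) * ?m" by (simp add: algebra_simps)
  let ?k = "?q + 1"
  have k: "1 \<le> ?k" "?k \<le> wc - 1" "(?k - 1) * (wr - 1) + 1 \<le> j" "j \<le> ?k * (wr - 1)"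
    using qk b1 b2 by auto
  have "(([],i,j),([],Child i ?k)) \<in> snd (snd (G0 wc wr))"
    unfolding G0_def Let_def snd_conv apply (rule UnI1, rule UnI2) using assms(4,5) k by blast
  moreover have "([],Child i ?k) \<in> fst (snd (G0 wc wr))"
    unfolding G0_def Let_def snd_conv fst_conv apply (rule UnI1, rule UnI2) using assms(4,5) k by blast
  ultimately show ?thesis by blast
qed

lemma base_lb:
  assumes wc: "2 \<le> wc" and wr: "2 \<le> wr" and S: "is_codeword (G0 wc wr) S" "S \<noteq> {}"
  shows "4 \<le> card S \<and> (\<exists>cs i j. (cs,i,j) \<in> S \<and> 1 \<le> j)"
proof -
  let ?V = "fst (G0 wc wr)" and ?C = "fst (snd (G0 wc wr))" and ?E = "snd (snd (G0 wc wr))"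
  have fV: "finite ?V" using fin_Gs[of wc wr 0] by simp
  have SV: "S \<subseteq> ?V" using S by (simp add: code_iff)
  have fS: "finite S" using SV fV finite_subset by blast
  note oth = other_code[OF S(1) fV]
  have inV: "cs = [] \<and> 1 \<le> i \<and> i \<le> wr \<and> j \<le> (wc - 1) * (wr - 1)" if "(cs,i,j) \<in> S" for cs i j
    using SV that V0_iff by blast
  have ll: "\<exists>i j. ([],i,j) \<in> S \<and> 1 \<le> j"
  proof -
    obtain cs i j where x: "(cs,i,j) \<in> S" using S(2) by auto
    hence c: "cs = []" "1 \<le> i" "i \<le> wr" using inV by auto
    show ?thesis
    proof (cases "j = 0")
      case False thus ?thesis by (intro exI[of _ i] exI[of _ j]) (use x c in auto)
    next
      case True
      have "([],Child i 1) \<in> ?C" "(([],i,0),([],Child i 1)) \<in> ?E" using c wc Child1_facts by auto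
      from oth[OF this(1) _ this(2)] x c True obtain y where "y \<in> S" "y \<noteq> ([],i,0)" "(y,([],Child i 1)) \<in> ?E"
        by auto
      then obtain j' where "y = ([],i,j')" "j' \<noteq> 0" using nb_child by blast
      thus ?thesis using \<open>y \<in> S\<close> by (intro exI[of _ i] exI[of _ j']) auto
    qed
  qed
  then obtain i j where x1: "([],i,j) \<in> S" "1 \<le> j" by auto
  hence c1: "1 \<le> i" "i \<le> wr" "j \<le> (wc - 1) * (wr - 1)" using inV by auto
  have "([],CJ j) \<in> ?C" "(([],i,j),([],CJ j)) \<in> ?E" using c1 x1 CJ_facts by auto
  from oth[OF this(1) x1(1) this(2)] obtain y where y: "y \<in> S" "y \<noteq> ([],i,j)" "(y,([],CJ j)) \<in> ?E" by auto
  then obtain i' where y': "y = ([],i',j)" "i' \<noteq> i" using nb_CJ by blast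
  hence c2: "1 \<le> i'" "i' \<le> wr" using inV y by auto
  obtain k where k: "(([],i,j),([],Child i k)) \<in> ?E" "([],Child i k) \<in> ?C"
    using child_exists[OF wr x1(2) c1(3) c1(1,2)] by auto
  from oth[OF k(2) x1(1) k(1)] obtain w1 where w1: "w1 \<in> S" "w1 \<noteq> ([],i,j)" "(w1,([],Child i k)) \<in> ?E" by auto
  then obtain a where a: "w1 = ([],i,a)" using nb_child by blast
  obtain k' where k': "(([],i',j),([],Child i' k')) \<in> ?E" "([],Child i' k') \<in> ?C"
    using child_exists[OF wr x1(2) c1(3) c2] by auto
  from oth[OF k'(2) y(1)[unfolded y'(1)] k'(1)] obtain w2 where w2: "w2 \<in> S" "w2 \<noteq> ([],i',j)" "(w2,([],Child i' k')) \<in> ?E" by auto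
  then obtain b where b: "w2 = ([],i',b)" using nb_child by blast
  have sub: "{([],i,j), ([],i',j), w1, w2} \<subseteq> S" using x1 y y' w1 w2 by auto
  have "card {([],i,j), ([],i',j), w1, w2} = 4" using a b w1(2) w2(2) y'(2) by (simp add: card_insert_if)
  hence "4 \<le> card S" using card_mono[OF fS sub] by simp
  thus ?thesis using x1 by auto
qed


definition ft :: "nat \<Rightarrow> vnode \<Rightarrow> vnode" where "ft t v = (t # fst v, snd v)"
definition proj :: "nat \<Rightarrow> vnode set \<Rightarrow> vnode set" where "proj t S = {v. ft t v \<in> S}"

lemma inj_ft: "inj (ft t)" by (auto simp: inj_def ft_def prod_eq_iff)
lemma ft_neq: "t \<noteq> t' \<Longrightarrow> ft t v \<noteq> ft t' w" by (auto simp: ft_def)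
lemma ft_proj: "ft t ` proj t S \<subseteq> S" by (auto simp: proj_def)

context
  fixes wc wr s V C E
  assumes G: "Gs wc wr s = (V,C,E)"
begin

abbreviation "V' \<equiv> fst (Gs wc wr (Suc s))"
abbreviation "C' \<equiv> fst (snd (Gs wc wr (Suc s)))"
abbreviation "Ep \<equiv> snd (snd (Gs wc wr (Suc s)))"

lemma I12: "finite V" "E \<subseteq> V \<times> C"
  using inv_Gs[of s wc wr] G by (auto simp: inv_def)

lemma I3: "(ds, Glue s' i j) \<in> C \<Longrightarrow> s' \<le> s"
proof -
  have "\<forall>ds s' i j. (ds, Glue s' i j) \<in> C \<longrightarrow> s' \<le> s" using inv_Gs[of s wc wr] G by (simp add: inv_def)
  thus "(ds, Glue s' i j) \<in> C \<Longrightarrow> s' \<le> s" by blast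
qed

lemma V'_ft: "v \<in> V' \<longleftrightarrow> (\<exists>t v0. v = ft t v0 \<and> 1 \<le> t \<and> t \<le> wr \<and> v0 \<in> V)"
  unfolding Gs_Suc_V[OF G] ft_def by auto

lemma Ep_lift: "(v,(ds,\<kappa>)) \<in> E \<Longrightarrow> 1 \<le> t \<Longrightarrow> t \<le> wr \<Longrightarrow> (ft t v, (t#ds,\<kappa>)) \<in> Ep"
  unfolding Gs_Suc_E[OF G] ft_def by (cases v) auto

lemma Ep_glue: "(cs,i,j) \<in> V \<Longrightarrow> 1 \<le> j \<Longrightarrow> 1 \<le> t \<Longrightarrow> t \<le> wr \<Longrightarrow> (ft t (cs,i,j), (cs, Glue (Suc s) i j)) \<in> Ep"
  unfolding Gs_Suc_E[OF G] ft_def by auto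

lemma C'_lift: "(ds,\<kappa>) \<in> C \<Longrightarrow> 1 \<le> t \<Longrightarrow> t \<le> wr \<Longrightarrow> (t#ds,\<kappa>) \<in> C'"
  unfolding Gs_Suc_C[OF G] by auto

lemma C'_glue: "(cs,i,j) \<in> V \<Longrightarrow> 1 \<le> j \<Longrightarrow> (cs, Glue (Suc s) i j) \<in> C'"
  unfolding Gs_Suc_C[OF G] by auto

lemma old_edge:
  assumes "(w,(t#ds,\<kappa>)) \<in> Ep" "(ds,\<kappa>) \<in> C"
  shows "w = ft t (pv w) \<and> (pv w,(ds,\<kappa>)) \<in> E"
proof -
  have "\<not> nk s (t#ds,\<kappa>)"
  proof
    assume "nk s (t#ds,\<kappa>)"
    then obtain i j where "\<kappa> = Glue (Suc s) i j" by (auto simp: nk_def)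
    thus False using I3 assms(2) by fastforce
  qed
  thus ?thesis using edge'[OF G assms(1)] by (cases w) (auto simp: ft_def pv_def pc_def neq_Nil_conv)
qed

lemma new_edge:
  assumes "(w,(cs,Glue (Suc s) i j)) \<in> Ep"
  shows "\<exists>t. w = ft t (cs,i,j)"
proof -
  have "nk s (cs,Glue (Suc s) i j)" by (simp add: nk_def)
  thus ?thesis using edge'[OF G assms(1)] by (cases w) (auto simp: ft_def nw_def neq_Nil_conv)
qed

lemma proj_code:
  assumes S: "is_codeword (Gs wc wr (Suc s)) S" and t: "1 \<le> t" "t \<le> wr"
  shows "is_codeword (V,C,E) (proj t S)"
proof -
  have SV: "S \<subseteq> V'" and ev: "\<And>c. c \<in> C' \<Longrightarrow> even (card {v\<in>S. (v,c) \<in> Ep})" using S by (auto simp: code_iff)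
  have "proj t S \<subseteq> V"
  proof
    fix v assume "v \<in> proj t S"
    hence "ft t v \<in> V'" using SV by (auto simp: proj_def)
    then obtain t' v0 where "ft t v = ft t' v0" "v0 \<in> V" using V'_ft by blast
    thus "v \<in> V" by (cases v; cases v0) (simp add: ft_def)
  qed
  moreover have "even (card {v\<in>proj t S. (v,c) \<in> E})" if c: "c \<in> C" for c
  proof -
    obtain ds \<kappa> where cc: "c = (ds,\<kappa>)" by (cases c)
    have "ft t ` {v\<in>proj t S. (v,c) \<in> E} = {w\<in>S. (w,(t#ds,\<kappa>)) \<in> Ep}"
    proof
      show "ft t ` {v\<in>proj t S. (v,c) \<in> E} \<subseteq> {w\<in>S. (w,(t#ds,\<kappa>)) \<in> Ep}"
        using Ep_lift t unfolding cc proj_def by auto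
      show "{w\<in>S. (w,(t#ds,\<kappa>)) \<in> Ep} \<subseteq> ft t ` {v\<in>proj t S. (v,c) \<in> E}"
      proof
        fix w assume w: "w \<in> {w\<in>S. (w,(t#ds,\<kappa>)) \<in> Ep}"
        hence "w = ft t (pv w) \<and> (pv w,(ds,\<kappa>)) \<in> E" using old_edge c cc by blast
        thus "w \<in> ft t ` {v\<in>proj t S. (v,c) \<in> E}" using w unfolding cc proj_def
          by (metis (mono_tags, lifting) image_eqI mem_Collect_eq)
      qed
    qed
    hence "card {v\<in>proj t S. (v,c) \<in> E} = card {w\<in>S. (w,(t#ds,\<kappa>)) \<in> Ep}"
      using card_image[OF inj_on_subset[OF inj_ft subset_UNIV]] by metis
    thus ?thesis using ev[OF C'_lift[OF c[unfolded cc] t]] by simp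
  qed
  ultimately show ?thesis by (simp add: code_iff G)
qed

lemma step_lb:
  assumes IH: "\<And>S. is_codeword (V,C,E) S \<Longrightarrow> S \<noteq> {} \<Longrightarrow> 2^(s+2) \<le> card S \<and> (\<exists>cs i j. (cs,i,j) \<in> S \<and> 1 \<le> j)"
    and S: "is_codeword (Gs wc wr (Suc s)) S" "S \<noteq> {}"
  shows "2^(Suc s+2) \<le> card S \<and> (\<exists>cs i j. (cs,i,j) \<in> S \<and> 1 \<le> j)"
proof -
  have SV: "S \<subseteq> V'" using S(1) unfolding code_iff by blast
  have fS: "finite S" using finite_subset[OF SV fin_Gs] .
  obtain x where "x \<in> S" using S(2) by auto
  then obtain t v0 where x: "x = ft t v0" "1 \<le> t" "t \<le> wr" using SV V'_ft by blast
  have "v0 \<in> proj t S" using \<open>x \<in> S\<close> x by (simp add: proj_def)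
  hence "proj t S \<noteq> {}" by auto
  from IH[OF proj_code[OF S(1) x(2,3)] this] obtain cs i j where
    c1: "2^(s+2) \<le> card (proj t S)" "(cs,i,j) \<in> proj t S" "1 \<le> j" by blast
  have pV: "proj t S \<subseteq> V" using proj_code[OF S(1) x(2,3)] unfolding code_iff fst_conv by blast
  hence cV: "(cs,i,j) \<in> V" using c1 by auto
  have g: "(cs, Glue (Suc s) i j) \<in> C'" using C'_glue[OF cV c1(3)] .
  have e: "(ft t (cs,i,j), (cs, Glue (Suc s) i j)) \<in> Ep" using Ep_glue[OF cV c1(3) x(2,3)] .
  have inS: "ft t (cs,i,j) \<in> S" using c1(2) by (simp add: proj_def)
  from other_code[OF S(1) fin_Gs g inS e] obtain w where w: "w \<in> S" "w \<noteq> ft t (cs,i,j)" "(w, (cs, Glue (Suc s) i j)) \<in> Ep"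
    by auto
  obtain t' where t': "w = ft t' (cs,i,j)" using new_edge[OF w(3)] by blast
  have tt: "t' \<noteq> t" using w(2) t' by auto
  obtain t'' v1 where "w = ft t'' v1" "1 \<le> t''" "t'' \<le> wr" using w(1) SV V'_ft by blast
  hence t'r: "1 \<le> t'" "t' \<le> wr" using t' by (auto simp: ft_def)
  have "(cs,i,j) \<in> proj t' S" using w(1) t' by (simp add: proj_def)
  hence "proj t' S \<noteq> {}" by auto
  from IH[OF proj_code[OF S(1) t'r] this] have c2: "2^(s+2) \<le> card (proj t' S)" by blast
  have pV': "proj t' S \<subseteq> V" using proj_code[OF S(1) t'r] unfolding code_iff fst_conv by blast
  have fp: "finite (proj t S)" "finite (proj t' S)" using finite_subset[OF pV I12(1)] finite_subset[OF pV' I12(1)] by auto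
  have disj: "ft t ` proj t S \<inter> ft t' ` proj t' S = {}" using tt by (auto simp: ft_def)
  have ci: "card (ft u ` A) = card A" for u A using card_image[OF inj_on_subset[OF inj_ft subset_UNIV]] .
  have "card (ft t ` proj t S \<union> ft t' ` proj t' S) = card (proj t S) + card (proj t' S)"
    using card_Un_disjoint[OF finite_imageI[OF fp(1)] finite_imageI[OF fp(2)] disj] ci by simp
  moreover have "ft t ` proj t S \<union> ft t' ` proj t' S \<subseteq> S" using ft_proj by blast
  ultimately have "card (proj t S) + card (proj t' S) \<le> card S" using card_mono[OF fS] by metis
  hence "2^(Suc s+2) \<le> card S" using c1(1) c2 by simp
  thus ?thesis using inS c1(3) by (auto simp: ft_def)
qed

end


lemma ft_eq_iff: "ft u v = ft u' v' \<longleftrightarrow> u = u' \<and> v = v'"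
  by (cases v; cases v') (auto simp: ft_def)

lemma lb_all:
  assumes "2 \<le> wc" "2 \<le> wr"
  shows "is_codeword (Gs wc wr s) S \<Longrightarrow> S \<noteq> {} \<Longrightarrow> 2^(s+2) \<le> card S \<and> (\<exists>cs i j. (cs,i,j) \<in> S \<and> 1 \<le> j)"
proof (induction s arbitrary: S)
  case 0 thus ?case using base_lb[OF assms] by simp
next
  case (Suc s)
  obtain V C E where G: "Gs wc wr s = (V,C,E)" by (cases "Gs wc wr s") auto
  show ?case using step_lb[OF G _ Suc.prems] Suc.IH unfolding G by blast
qed

context
  fixes wc wr s V C E
  assumes G: "Gs wc wr s = (V,C,E)"
begin

lemma lift_code:
  assumes T: "is_codeword (V,C,E) T" and wr: "2 \<le> wr"
  shows "is_codeword (Gs wc wr (Suc s)) (ft 1 ` T \<union> ft 2 ` T) \<and> card (ft 1 ` T \<union> ft 2 ` T) = 2 * card T"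
proof -
  let ?T = "ft 1 ` T \<union> ft 2 ` T"
  have TV: "T \<subseteq> V" and evT: "\<And>c. c \<in> C \<Longrightarrow> even (card {v\<in>T. (v,c) \<in> E})"
    using T unfolding code_iff fst_conv snd_conv by blast+
  have fT: "finite T" using finite_subset[OF TV I12(1)[OF G]] .
  have ci: "card (ft u ` A) = card A" for u A using card_image[OF inj_on_subset[OF inj_ft subset_UNIV]] .
  have memT: "w \<in> ?T \<longleftrightarrow> (\<exists>u v. w = ft u v \<and> (u = 1 \<or> u = 2) \<and> v \<in> T)" for w by blast
  have sub: "?T \<subseteq> fst (Gs wc wr (Suc s))"
  proof
    fix w assume "w \<in> ?T"
    then obtain u v where "w = ft u v" "u = 1 \<or> u = 2" "v \<in> T" using memT by blast
    thus "w \<in> fst (Gs wc wr (Suc s))" unfolding V'_ft[OF G] using TV wr by fastforce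
  qed
  have ev: "even (card {w\<in>?T. (w,c) \<in> snd (snd (Gs wc wr (Suc s)))})" if c: "c \<in> fst (snd (Gs wc wr (Suc s)))" for c
  proof -
    let ?A = "{w\<in>?T. (w,c) \<in> snd (snd (Gs wc wr (Suc s)))}"
    from c[unfolded Gs_Suc_C[OF G]] show ?thesis
    proof (elim disjE exE conjE)
      fix t ds \<kappa> assume cc: "c = (t # ds, \<kappa>)" "1 \<le> t" "t \<le> wr" "(ds, \<kappa>) \<in> C"
      let ?B = "{v\<in>T. (v,(ds,\<kappa>)) \<in> E}"
      have A1: "w \<in> ?A \<Longrightarrow> t \<le> 2 \<and> w \<in> ft t ` ?B" for w
      proof -
        assume w: "w \<in> ?A"
        hence o: "w = ft t (pv w) \<and> (pv w,(ds,\<kappa>)) \<in> E" using old_edge[OF G _ cc(4)] cc(1) by blast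
        from w obtain u v where "w = ft u v" "u = 1 \<or> u = 2" "v \<in> T" using memT by blast
        hence "u = t" "pv w = v" using o ft_eq_iff by metis+
        thus ?thesis using o \<open>u = 1 \<or> u = 2\<close> \<open>v \<in> T\<close> by auto
      qed
      show ?thesis
      proof (cases "t \<le> 2")
        case True
        have "?A = ft t ` ?B"
        proof
          show "?A \<subseteq> ft t ` ?B" using A1 by blast
          show "ft t ` ?B \<subseteq> ?A"
          proof
            fix w assume "w \<in> ft t ` ?B"
            then obtain v where v: "w = ft t v" "v \<in> T" "(v,(ds,\<kappa>)) \<in> E" by blast
            have "t = 1 \<or> t = 2" using True cc(2) by auto
            hence "w \<in> ?T" using v by blast
            moreover have "(w,c) \<in> snd (snd (Gs wc wr (Suc s)))" using Ep_lift[OF G v(3) cc(2,3)] v cc by simp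
            ultimately show "w \<in> ?A" by blast
          qed
        qed
        thus ?thesis using ci evT[OF cc(4)] by simp
      next
        case False
        hence "?A = {}" using A1 by blast
        thus ?thesis by (simp only: card.empty even_zero)
      qed
    next
      fix cs i j assume cc: "c = (cs, Glue (Suc s) i j)" "(cs, i, j) \<in> V" "1 \<le> j"
      have A1: "w \<in> ?A \<Longrightarrow> (cs,i,j) \<in> T \<and> (w = ft 1 (cs,i,j) \<or> w = ft 2 (cs,i,j))" for w
      proof -
        assume w: "w \<in> ?A"
        then obtain u where u: "w = ft u (cs,i,j)" using new_edge[OF G] cc(1) by blast
        from w obtain u' v where "w = ft u' v" "u' = 1 \<or> u' = 2" "v \<in> T" using memT by blast
        thus ?thesis using u ft_eq_iff by metis
      qed
      show ?thesis
      proof (cases "(cs,i,j) \<in> T")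
        case True
        have "?A = {ft 1 (cs,i,j), ft 2 (cs,i,j)}"
        proof
          show "?A \<subseteq> {ft 1 (cs,i,j), ft 2 (cs,i,j)}" using A1 by blast
          have "(ft 1 (cs,i,j), c) \<in> snd (snd (Gs wc wr (Suc s)))" "(ft 2 (cs,i,j), c) \<in> snd (snd (Gs wc wr (Suc s)))"
            using Ep_glue[OF G cc(2,3)] wr cc(1) by auto
          thus "{ft 1 (cs,i,j), ft 2 (cs,i,j)} \<subseteq> ?A" using True by blast
        qed
        moreover have "ft 1 (cs,i,j) \<noteq> ft 2 (cs,i,j)" by (simp add: ft_eq_iff)
        ultimately show ?thesis by simp
      next
        case False
        hence "?A = {}" using A1 by blast
        thus ?thesis by (simp only: card.empty even_zero)
      qed
    qed
  qed
  have "is_codeword (Gs wc wr (Suc s)) ?T" unfolding code_iff using sub ev by blast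
  moreover have "card ?T = 2 * card T"
  proof -
    have "ft 1 ` T \<inter> ft 2 ` T = {}" by (auto simp: ft_eq_iff)
    hence "card ?T = card (ft 1 ` T) + card (ft 2 ` T)" using card_Un_disjoint fT by blast
    thus ?thesis using ci by simp
  qed
  ultimately show ?thesis by blast
qed

end


lemma sep_insert: "{v \<in> insert a A. P v} = (if P a then insert a {v\<in>A. P v} else {v\<in>A. P v})"
  by auto

lemma E0_small3:
  assumes "3 \<le> wr" "2 \<le> wc" "1 \<le> a" "a \<le> wr" "b = 1 \<or> b = 2"
  shows "(([],a,b),c) \<in> snd (snd (G0 wc wr)) \<longleftrightarrow> (c = ([],Child a 1) \<or> c = ([],CJ b))"
proof -
  have m: "2 \<le> wr - 1" using assms by simp
  have "1 * (wr - 1) \<le> (wc - 1) * (wr - 1)" by (rule mult_le_mono1) (use assms in simp)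
  hence L: "2 \<le> (wc - 1) * (wr - 1)" using m by linarith
  have k1: "k = 1" if "(k - 1) * (wr - 1) + 1 \<le> b" "1 \<le> k" for k
  proof (rule ccontr)
    assume "k \<noteq> 1"
    hence "1 \<le> k - 1 \<or> k = 0" by auto
    thus False
    proof
      assume "1 \<le> k - 1"
      hence "1 * (wr - 1) \<le> (k - 1) * (wr - 1)" by (rule mult_le_mono1)
      hence "wr - 1 \<le> (k - 1) * (wr - 1)" by simp
      thus False using that m assms(5) by linarith
    next
      assume "k = 0" thus False using that assms(5) m by auto
    qed
  qed
  have k1': "k = Suc 0" if "Suc ((k - Suc 0) * (wr - Suc 0)) \<le> b" "Suc 0 \<le> k" for k using k1 that by simp
  have k0: "k = 1" if "(k - 1) * (wr - 1) \<le> 1" "1 \<le> k" for k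
  proof (rule ccontr)
    assume "k \<noteq> 1"
    hence "1 \<le> k - 1" using that(2) by simp
    hence "1 * (wr - 1) \<le> (k - 1) * (wr - 1)" by (rule mult_le_mono1)
    hence "wr - 1 \<le> (k - 1) * (wr - 1)" by (simp only: mult_1)
    thus False using that(1) m by linarith
  qed
  have k1'': "k = Suc 0" if "(k - Suc 0) * (wr - Suc 0) \<le> Suc 0" "Suc 0 \<le> k" for k
    using k0[of k] that by simp
  show ?thesis
  proof
    assume "(([],a,b),c) \<in> snd (snd (G0 wc wr))"
    thus "c = ([],Child a 1) \<or> c = ([],CJ b)" unfolding G0_def Let_def snd_conv
      using assms(5) by (auto dest: k1' intro: k1'')
  next
    assume "c = ([],Child a 1) \<or> c = ([],CJ b)"
    thus "(([],a,b),c) \<in> snd (snd (G0 wc wr))"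
    proof
      assume c: "c = ([],Child a 1)"
      show ?thesis unfolding G0_def Let_def snd_conv c
        apply (rule UnI1, rule UnI2) using assms m by auto
    next
      assume c: "c = ([],CJ b)"
      show ?thesis unfolding G0_def Let_def snd_conv c
        apply (rule UnI2) using assms L by auto
    qed
  qed
qed


lemma T0_3:
  assumes wr: "3 \<le> wr" and wc: "2 \<le> wc"
  shows "is_codeword (G0 wc wr) {([],1,1),([],1,2),([],2,1),([],2,2)}"
proof -
  let ?T = "{([],1,1),([],1,2),([],2,1),([],2,2)} :: vnode set"
  have "1 * (wr - 1) \<le> (wc - 1) * (wr - 1)" by (rule mult_le_mono1) (use wc in simp)
  hence L: "2 \<le> (wc - 1) * (wr - 1)" using wr by linarith
  have sub: "?T \<subseteq> fst (G0 wc wr)" using L wr wc by (auto simp: V0_iff)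
  have e: "(([],a,b),c) \<in> snd (snd (G0 wc wr)) \<longleftrightarrow> (c = ([],Child a 1) \<or> c = ([],CJ b))"
    if "a = 1 \<or> a = 2" "b = 1 \<or> b = 2" for a b c
    using E0_small3[OF wr wc, of a b c] that wr by auto
  have ev: "even (card {v\<in>?T. (v,c) \<in> snd (snd (G0 wc wr))})" for c
  proof -
    have "{v\<in>?T. (v,c) \<in> snd (snd (G0 wc wr))} = (if c = ([],Child 1 1) then {([],1,1),([],1,2)}
       else if c = ([],Child 2 1) then {([],2,1),([],2,2)} else if c = ([],CJ 1) then {([],1,1),([],2,1)}
       else if c = ([],CJ 2) then {([],1,2),([],2,2)} else {})"
      unfolding sep_insert by (simp add: e)
    thus ?thesis by simp
  qed
  show ?thesis unfolding code_iff using sub ev by blast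
qed

lemma T0_2:
  shows "is_codeword (G0 2 2) {([],1,0),([],2,0),([],1,1),([],2,1)}"
proof -
  let ?T = "{([],1,0),([],2,0),([],1,1),([],2,1)} :: vnode set"
  have sub: "?T \<subseteq> fst (G0 2 2)" by (auto simp: V0_iff)
  have e: "(([],a,b),c) \<in> snd (snd (G0 2 2)) \<longleftrightarrow> (if b = 0 then c = ([],Root) \<or> c = ([],Child a 1) else c = ([],Child a 1) \<or> c = ([],CJ 1))"
    if "a = 1 \<or> a = 2" "b = 0 \<or> b = 1" for a b c
    using that unfolding G0_def Let_def snd_conv by auto
  have ev: "even (card {v\<in>?T. (v,c) \<in> snd (snd (G0 2 2))})" for c
  proof -
    have "{v\<in>?T. (v,c) \<in> snd (snd (G0 2 2))} = (if c = ([],Root) then {([],1,0),([],2,0)}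
       else if c = ([],Child 1 1) then {([],1,0),([],1,1)} else if c = ([],Child 2 1) then {([],2,0),([],2,1)}
       else if c = ([],CJ 1) then {([],1,1),([],2,1)} else {})"
      unfolding sep_insert by (simp add: e)
    thus ?thesis by simp
  qed
  show ?thesis unfolding code_iff using sub ev by blast
qed


lemma enat_pow: "(2::enat) ^ n = enat (2 ^ n)"
  by (metis of_nat_eq_enat of_nat_numeral of_nat_power)

lemma codeword_exists:
  assumes wc: "2 \<le> wc" and wcr: "wc \<le> wr"
  shows "\<exists>T. is_codeword (Gs wc wr s) T \<and> card T = 2^(s+2)"
proof (induction s)
  case 0
  show ?case
  proof (cases "wr = 2")
    case True
    hence "wc = 2" using wc wcr by simp
    thus ?thesis using T0_2 True
      by (intro exI[of _ "{([],1,0),([],2,0),([],1,1),([],2,1)}"]) simp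
  next
    case False
    hence "3 \<le> wr" using wc wcr by simp
    from T0_3[OF this wc] show ?thesis
      by (intro exI[of _ "{([],1,1),([],1,2),([],2,1),([],2,2)}"]) simp
  qed
next
  case (Suc s)
  then obtain T where T: "is_codeword (Gs wc wr s) T" "card T = 2^(s+2)" by blast
  obtain V C E where G: "Gs wc wr s = (V,C,E)" by (cases "Gs wc wr s") auto
  have wr: "2 \<le> wr" using wc wcr by simp
  from lift_code[OF G T(1)[unfolded G] wr] T(2) show ?case by auto
qed

theorem proposition2:
  fixes wc wr :: nat
  assumes "2 \<le> wc" and "wc \<le> wr"
  shows "girth (Hreg wc wr) = 8 \<and> dmin (Hreg wc wr) = 2 ^ wc"
proof -
  have wr: "2 \<le> wr" using assms by simp
  have g: "girth (Hreg wc wr) = 8" unfolding Hreg_def using girth_Gs[OF assms(1) wr] .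
  have n: "wc - 2 + 2 = wc" using assms by simp
  obtain T where T: "is_codeword (Gs wc wr (wc - 2)) T" "card T = 2^(wc - 2 + 2)"
    using codeword_exists[OF assms, of "wc - 2"] by blast
  have ne: "T \<noteq> {}" using T(2) by auto
  have "dmin (Hreg wc wr) \<le> enat (card T)" unfolding dmin_def Hreg_def
    by (rule INF_lower) (use T ne in simp)
  moreover have cT: "card T = 2 ^ wc" using T(2) unfolding n .
  ultimately have up: "dmin (Hreg wc wr) \<le> 2 ^ wc" unfolding enat_pow by simp
  have "enat (2 ^ wc) \<le> dmin (Hreg wc wr)" unfolding dmin_def Hreg_def
  proof (rule INF_greatest)
    fix S assume "S \<in> {S. is_codeword (Gs wc wr (wc - 2)) S \<and> S \<noteq> {}}"
    hence "2^(wc - 2 + 2) \<le> card S" using lb_all[OF assms(1) wr] by blast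
    hence "2^wc \<le> card S" unfolding n .
    thus "enat (2 ^ wc) \<le> enat (card S)" by simp
  qed
  hence "2 ^ wc \<le> dmin (Hreg wc wr)" by (simp add: enat_pow)
  with up g show ?thesis by simp
qed

end
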